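(* Let $p$ be a prime and let $n\geq 1$, $k\geq 1$ be integers. For $s\geq k$ and $j\geq 0$ define numbers $M(t_s^{p^j})$ recursively by: $M(t_s^{p^j})=2s-1$ if $k\leq s\leq n+k-1$, and $$M(t_{s}^{p^j})=\max\{2s-1,\ p\,M(t_{s-n}^{p^{j+n-1}})+1\}\quad\text{if } s\geq n+k.$$ Let $s_0=\max\left\{\left[\frac{2pn+p-2}{2(p-1)}\right],\ n+k-1\right\}$, where $[x]$ denotes the integer part of $x$. Then: (1) $M(t_{s}^{p^j})>M(t_{s-1}^{p^j})+1$ (for $s>k$); (2) for $k\leq s\leq s_0$, $M(t_s^{p^j})=2s-1$; (3) for $s>s_0$, $p\,M(t_{s-n}^{p^j})+1\geq 2s-1$ and $M(t_s^{p^j})= p\,M(t_{s-n}^{p^{j}})+1$.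
   Context: The numbers $M(t_s^{p^j})$ are the "May filtrations" of the elements $t_s^{p^j}$ of the Hopf algebra $S(n,k)=\mathbb{Z}/p[t_k,t_{k+1},\dots]/(t_s^{p^n}-t_s)$; for this statement only the recursive definition above is needed. *)

theory Defs
  imports "HOL-Computational_Algebra.Primes"
begin

text \<open>May filtration M(t_s^{p^j}) = Mfilt p n k s j, defined for s \<ge> k and n \<ge> 1.
  Outside that range (n = 0 or s < k) the value is a dummy 0 and never used.\<close>
function Mfilt :: "nat \<Rightarrow> nat \<Rightarrow> nat \<Rightarrow> nat \<Rightarrow> nat \<Rightarrow> nat" where
  "Mfilt p n k s j =
     (if n = 0 \<or> s < k then 0
      else if s \<le> n + k - 1 then 2 * s - 1
      else max (2 * s - 1) (p * Mfilt p n k (s - n) (j + n - 1) + 1))"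
  by pat_completeness auto
termination
  by (relation "measure (\<lambda>(p, n, k, s, j). s)") auto

definition s0 :: "nat \<Rightarrow> nat \<Rightarrow> nat \<Rightarrow> nat" where
  "s0 p n k = max ((2 * p * n + p - 2) div (2 * (p - 1))) (n + k - 1)"

end

theory Submission
  imports Defs
begin

declare Mfilt.simps[simp del]

lemma M_indep: "Mfilt p n k s j = Mfilt p n k s j'"
proof (induction s arbitrary: j j' rule: less_induct)
  case (less s)
  show ?case
  proof (cases "n = 0 \<or> s < k \<or> s \<le> n + k - 1")
    case True then show ?thesis by (subst (1 2) Mfilt.simps) auto
  next
    case False
    then have "s - n < s" by auto
    then have e: "Mfilt p n k (s - n) (j + n - 1) = Mfilt p n k (s - n) (j' + n - 1)"
      using less by blast
    have u1: "Mfilt p n k s j = max (2 * s - 1) (p * Mfilt p n k (s - n) (j + n - 1) + 1)"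
      using False Mfilt.simps[of p n k s j] by auto
    have u2: "Mfilt p n k s j' = max (2 * s - 1) (p * Mfilt p n k (s - n) (j' + n - 1) + 1)"
      using False Mfilt.simps[of p n k s j'] by auto
    show ?thesis unfolding u1 u2 e ..
  qed
qed

lemma M_ge: assumes "n \<ge> 1" "k \<le> s" shows "Mfilt p n k s j \<ge> 2 * s - 1"
  using assms by (subst Mfilt.simps) auto

lemma M_rec: assumes "n \<ge> 1" "n + k \<le> s"
  shows "Mfilt p n k s j = max (2 * s - 1) (p * Mfilt p n k (s - n) j + 1)"
proof -
  have u1: "Mfilt p n k s j = max (2 * s - 1) (p * Mfilt p n k (s - n) (j + n - 1) + 1)"
    using assms Mfilt.simps[of p n k s j] by auto
  show ?thesis unfolding u1 using M_indep[of p n k "s-n" "j+n-1" j] by simp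
qed

lemma M_base: assumes "n \<ge> 1" "k \<le> s" "s \<le> n + k - 1"
  shows "Mfilt p n k s j = 2 * s - 1"
  using assms by (subst Mfilt.simps) auto

lemma M_step: assumes "n \<ge> 1" "p \<ge> 2" "k \<ge> 1" "k < s"
  shows "Mfilt p n k s j \<ge> Mfilt p n k (s - 1) j + 2"
  using assms(4)
proof (induction s rule: less_induct)
  case (less s)
  show ?case
  proof (cases "n + k \<le> s - 1")
    case True
    have ih: "Mfilt p n k (s - n) j \<ge> Mfilt p n k (s - n - 1) j + 2"
      using less.IH[of "s - n"] True assms by auto
    have a: "Mfilt p n k s j = max (2 * s - 1) (p * Mfilt p n k (s - n) j + 1)"
      using M_rec assms True by auto
    have b: "Mfilt p n k (s - 1) j = max (2 * (s - 1) - 1) (p * Mfilt p n k (s - 1 - n) j + 1)"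
      using M_rec assms True by auto
    have "s - 1 - n = s - n - 1" by simp
    moreover have "p * Mfilt p n k (s - n) j \<ge> p * (Mfilt p n k (s - n - 1) j + 2)"
      using ih mult_le_mono2 by blast
    ultimately have c: "p * Mfilt p n k (s - 1 - n) j + 2 \<le> p * Mfilt p n k (s - n) j"
      using assms(2) by simp
    show ?thesis unfolding a b using c True by (simp add: max_def; linarith)
  next
    case False
    then have "Mfilt p n k (s - 1) j = 2 * (s - 1) - 1"
      using M_base assms less by auto
    moreover have "Mfilt p n k s j \<ge> 2 * s - 1" using M_ge assms less by auto
    ultimately show ?thesis using less assms by auto
  qed
qed

theorem lemma2p4:
  fixes p n k :: nat
  assumes "prime p" and "n \<ge> 1" and "k \<ge> 1"
  shows "(\<forall>s j. s > k \<longrightarrow> Mfilt p n k s j > Mfilt p n k (s - 1) j + 1)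
       \<and> (\<forall>s j. k \<le> s \<and> s \<le> s0 p n k \<longrightarrow> Mfilt p n k s j = 2 * s - 1)
       \<and> (\<forall>s j. s > s0 p n k \<longrightarrow>
              p * Mfilt p n k (s - n) j + 1 \<ge> 2 * s - 1
            \<and> Mfilt p n k s j = p * Mfilt p n k (s - n) j + 1)"
proof -
  have p2: "p \<ge> 2" using assms(1) prime_ge_2_nat by blast
  define D where "D = (2 * p * n + p - 2) div (2 * (p - 1))"
  have Diff: "s \<le> D \<longleftrightarrow> s * (2 * (p - 1)) \<le> 2 * p * n + p - 2" for s
    unfolding D_def using p2 by (intro less_eq_div_iff_mult_less_eq) auto
  have s0D: "s0 p n k = max D (n + k - 1)" unfolding s0_def D_def by simp
  have P1: "\<forall>s j. s > k \<longrightarrow> Mfilt p n k s j > Mfilt p n k (s - 1) j + 1"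
  proof (intro allI impI)
    fix s j assume "k < s"
    then have "Mfilt p n k (s - 1) j + 2 \<le> Mfilt p n k s j" by (rule M_step[OF assms(2) p2 assms(3)])
    then show "Mfilt p n k (s - 1) j + 1 < Mfilt p n k s j" by simp
  qed
  have P2: "Mfilt p n k s j = 2 * s - 1" if "k \<le> s" "s \<le> s0 p n k" for s j
    using that
  proof (induction s rule: less_induct)
    case (less s)
    show ?case
    proof (cases "s \<le> n + k - 1")
      case True then show ?thesis using M_base assms less by auto
    next
      case False
      then have sD: "s \<le> D" and nk: "n + k \<le> s" using less s0D by auto
      have ih: "Mfilt p n k (s - n) j = 2 * (s - n) - 1"
        using less.IH[of "s - n"] less.prems assms nk by auto
      have m: "s * (2 * (p - 1)) \<le> 2 * p * n + p - 2" using Diff sD by blast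
      have "int (p * (2 * (s - n) - 1) + 1) \<le> int (2 * s - 1)"
      proof -
        have "int (s * (2 * (p - 1))) \<le> int (2 * p * n + p - 2)" using m by linarith
        then have "int s * (2 * (int p - 1)) \<le> 2 * int p * int n + int p - 2"
          using p2 by (simp add: of_nat_diff)
        moreover have X: "int (2 * (s - n) - 1) = 2 * int s - 2 * int n - 1" using nk assms by linarith
        moreover have Y: "int (2 * s - 1) = 2 * int s - 1" using nk assms by linarith
        moreover have Z: "int (p * (2 * (s - n) - 1) + 1) = int p * int (2 * (s - n) - 1) + 1"
          by (simp only: of_nat_add of_nat_mult of_nat_1)
        ultimately show ?thesis unfolding Z X Y by (simp add: algebra_simps)
      qed
      then have "p * (2 * (s - n) - 1) + 1 \<le> 2 * s - 1" by linarith
      then show ?thesis using M_rec[OF assms(2) nk] ih by auto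
    qed
  qed
  have P3: "p * Mfilt p n k (s - n) j + 1 \<ge> 2 * s - 1
            \<and> Mfilt p n k s j = p * Mfilt p n k (s - n) j + 1" if "s > s0 p n k" for s j
  proof -
    have sD: "\<not> s \<le> D" and nk: "n + k \<le> s" using that s0D assms by auto
    have m: "\<not> s * (2 * (p - 1)) \<le> 2 * p * n + p - 2" using Diff sD by blast
    have g: "Mfilt p n k (s - n) j \<ge> 2 * (s - n) - 1" using M_ge assms nk by auto
    have "int (p * (2 * (s - n) - 1) + 1) \<ge> int (2 * s - 1)"
    proof -
      have "int (s * (2 * (p - 1))) > int (2 * p * n + p - 2)" using m by linarith
      then have "int s * (2 * (int p - 1)) > 2 * int p * int n + int p - 2"
        using p2 by (simp add: of_nat_diff)
      moreover have X: "int (2 * (s - n) - 1) = 2 * int s - 2 * int n - 1" using nk assms by linarith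
      moreover have Y: "int (2 * s - 1) = 2 * int s - 1" using nk assms by linarith
      moreover have Z: "int (p * (2 * (s - n) - 1) + 1) = int p * int (2 * (s - n) - 1) + 1"
          by (simp only: of_nat_add of_nat_mult of_nat_1)
        ultimately show ?thesis unfolding Z X Y by (simp add: algebra_simps)
    qed
    then have "p * (2 * (s - n) - 1) + 1 \<ge> 2 * s - 1" by linarith
    moreover have "p * Mfilt p n k (s - n) j \<ge> p * (2 * (s - n) - 1)" using g by simp
    ultimately have G: "p * Mfilt p n k (s - n) j + 1 \<ge> 2 * s - 1" by linarith
    have R: "Mfilt p n k s j = max (2 * s - 1) (p * Mfilt p n k (s - n) j + 1)"
      by (rule M_rec[OF assms(2) nk])
    show ?thesis using G unfolding R by simp
  qed
  show ?thesis using P1 P2 P3 by blast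
qed

end
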